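(* For every $x\in X$ we have $p\in\omega_T(x)$, where $p=(v_{0,0},v_{1,0},v_{2,0},\ldots)$.
   Context: Paths and cycles: a graph is $G=(V,E)$ with $V$ finite and $E\subset V\times V$. A path is a finite sequence of vertices $(u_0,\dots,u_L)$ with $(u_j,u_{j+1})\in E$; its length is $|\cdot|=L$; a cycle is a path with $u_0=u_L$. For paths where one ends where the next starts, $+$ denotes concatenation and $a\,c$ means the cycle $c$ traversed $a$ times. Construction: $G_0=(V_0,E_0)$ with $V_0=\{v_{0,0}\}$, $E_0=\{e_{0,0}\}$, $e_{0,0}=(v_{0,0},v_{0,0})$. For $n\geq1$, $G_n=(V_n,E_n)$ consists of a vertex $v_{n,0}$, the loop $e_{n,0}=(v_{n,0},v_{n,0})$, and $n$ cycles $c_{n,1},\dots,c_{n,n}$, each starting and ending at $v_{n,0}$, whose vertices other than $v_{n,0}$ are pairwise distinct (within each cycle and across cycles); $V_n$ is the set of all these vertices and $E_n$ consists of $e_{n,0}$ and the edges of the cycles. The maps $\varphi_n\colon V_{n+1}\to V_n$ and the lengths of the cycles $c_{n+1,i}$ are defined together: $\varphi_n(v_{n+1,0})=v_{n,0}$, and for each $i$ a path $P_{n,i}$ in $G_n$ from $v_{n,0}$ to $v_{n,0}$ is given; $c_{n+1,i}$ has length $|P_{n,i}|$ and $\varphi_n$ maps its $j$-th vertex to the $j$-th vertex of $P_{n,i}$ (written $\varphi_n(c_{n+1,i})=P_{n,i}$). The paths are: $P_{0,1}=10\,e_{0,0}$; for $n\geq1$: $P_{n,i}=e_{n,0}+2c_{n,i}+2c_{n,i+1}+\dots+2c_{n,n}+e_{n,0}$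 for $2\leq i\leq n$; $P_{n,n+1}=(n+2)^2\big(\sum_{i=1}^n|c_{n,i}|\big)\,e_{n,0}$; and $P_{n,1}=(1\,e_{n,0}+2c_{n,1})+(2\,e_{n,0}+2c_{n,1})+\dots+(k_n\,e_{n,0}+2c_{n,1})+e_{n,0}+2c_{n,2}+\dots+2c_{n,n}+e_{n,0}$, where $k_n=2\big(1+\sum_{i=1}^n|c_{n,i}|\big)$. Let $X=\{x\in\prod_{n\geq0}V_n:\varphi_n(x_{n+1})=x_n\ \forall n\}$ with metric $d(x,y)=2^{-\min\{i:x_i\neq y_i\}}$ ($d(x,x)=0$); $X$ is a compact zero-dimensional metric space, and $T\colon X\to X$ defined by $T(x)=y$ iff $(x_n,y_n)\in E_n$ for all $n$ is a well-defined homeomorphism. Write $x_n$ for the $n$-th coordinate of $x$. $\omega_T(x)=\bigcap_{n\geq0}\overline{\{T^k(x):k\geq n\}}$. *)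

theory Defs
  imports Complex_Main
begin

text \<open>Vertices of G_n are pairs of naturals: (0,0) is v_{n,0}; (i,j) with 1 <= i <= n and
 1 <= j < |c_{n,i}| is the j-th vertex of the cycle c_{n,i}.
 A closed path at v_{n,0} of length L is represented by the list of its first L vertices
 (the final vertex, which is v_{n,0}, is omitted); concatenation is list append.\<close>

type_synonym vtx = "nat \<times> nat"

definition v0 :: vtx where "v0 = (0,0)"

definition cycP :: "(nat \<Rightarrow> nat) \<Rightarrow> nat \<Rightarrow> vtx list" where
  "cycP L i = v0 # map (\<lambda>j. (i, j)) [1..<L i]"

definition loopP :: "nat \<Rightarrow> vtx list" where
  "loopP a = replicate a v0"

definition timesP :: "nat \<Rightarrow> vtx list \<Rightarrow> vtx list" where
  "timesP a c = concat (replicate a c)"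

definition Pdef :: "nat \<Rightarrow> (nat \<Rightarrow> nat) \<Rightarrow> nat \<Rightarrow> vtx list" where
  "Pdef n L i =
    (let S = (\<Sum>k = 1..n. L k); kn = 2 * (1 + S) in
     if i = 1 then
        concat (map (\<lambda>a. loopP a @ timesP 2 (cycP L 1)) [1..<kn + 1])
        @ loopP 1 @ concat (map (\<lambda>k. timesP 2 (cycP L k)) [2..<n + 1]) @ loopP 1
     else if 2 \<le> i \<and> i \<le> n then
        loopP 1 @ concat (map (\<lambda>k. timesP 2 (cycP L k)) [i..<n + 1]) @ loopP 1
     else if i = n + 1 then loopP ((n + 2)^2 * S)
     else [])"

primrec Pth :: "nat \<Rightarrow> nat \<Rightarrow> vtx list" where
  "Pth 0 = (\<lambda>i. if i = 1 then loopP 10 else [])"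
| "Pth (Suc m) = Pdef (Suc m) (\<lambda>k. length (Pth m k))"

text \<open>|c_{n,i}| for n >= 1, 1 <= i <= n: it equals |P_{n-1,i}|.\<close>
definition clen :: "nat \<Rightarrow> nat \<Rightarrow> nat" where
  "clen n i = (if n = 0 then 0 else length (Pth (n - 1) i))"

definition Vn :: "nat \<Rightarrow> vtx set" where
  "Vn n = {v0} \<union> {(i, j) | i j. 1 \<le> i \<and> i \<le> n \<and> 1 \<le> j \<and> j < clen n i}"

definition cycv :: "nat \<Rightarrow> nat \<Rightarrow> nat \<Rightarrow> vtx" where
  "cycv n i j = (if j = 0 \<or> j = clen n i then v0 else (i, j))"

definition En :: "nat \<Rightarrow> (vtx \<times> vtx) set" where
  "En n = {(v0, v0)} \<union>
     {(cycv n i j, cycv n i (Suc j)) | i j. 1 \<le> i \<and> i \<le> n \<and> j < clen n i}"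

text \<open>phi_n : V_{n+1} -> V_n, with phi_n(c_{n+1,i}) = P_{n,i}.\<close>
definition phi :: "nat \<Rightarrow> vtx \<Rightarrow> vtx" where
  "phi n v = (if v = v0 then v0 else Pth n (fst v) ! snd v)"

definition Xsp :: "(nat \<Rightarrow> vtx) set" where
  "Xsp = {x. (\<forall>n. x n \<in> Vn n) \<and> (\<forall>n. phi n (x (Suc n)) = x n)}"

definition dX :: "(nat \<Rightarrow> vtx) \<Rightarrow> (nat \<Rightarrow> vtx) \<Rightarrow> real" where
  "dX x y = (if x = y then 0 else (1/2) ^ (LEAST i. x i \<noteq> y i))"

definition Tmap :: "(nat \<Rightarrow> vtx) \<Rightarrow> (nat \<Rightarrow> vtx)" where
  "Tmap x = (THE y. y \<in> Xsp \<and> (\<forall>n. (x n, y n) \<in> En n))"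

definition Xclosure :: "(nat \<Rightarrow> vtx) set \<Rightarrow> (nat \<Rightarrow> vtx) set" where
  "Xclosure A = {y \<in> Xsp. \<forall>e>0. \<exists>a\<in>A. dX a y < e}"

definition omegaT :: "(nat \<Rightarrow> vtx) \<Rightarrow> (nat \<Rightarrow> vtx) set" where
  "omegaT x = (\<Inter>n. Xclosure {(Tmap ^^ k) x | k. k \<ge> n})"

definition pnt :: "nat \<Rightarrow> vtx" where
  "pnt = (\<lambda>n. v0)"

end

theory Submission
  imports Defs
begin

definition cp :: "nat \<Rightarrow> vtx list \<Rightarrow> bool" where
  "cp n P \<longleftrightarrow> (\<forall>j<length P. (P!j, (P@[v0])!Suc j) \<in> En n) \<and> (P \<noteq> [] \<longrightarrow> hd P = v0)"

lemma v0_En: "(v0, v0) \<in> En n" by (simp add: En_def)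
lemma v0_Vn: "v0 \<in> Vn n" by (simp add: Vn_def)

lemma cp_Nil: "cp n []" by (simp add: cp_def)

lemma cp_append:
  assumes "cp n P" "cp n Q" shows "cp n (P @ Q)"
proof -
  have hP: "P \<noteq> [] \<Longrightarrow> hd P = v0" and hQ: "Q \<noteq> [] \<Longrightarrow> hd Q = v0"
    using assms by (auto simp: cp_def)
  have eP: "\<And>j. j < length P \<Longrightarrow> (P!j, (P@[v0])!Suc j) \<in> En n"
    and eQ: "\<And>j. j < length Q \<Longrightarrow> (Q!j, (Q@[v0])!Suc j) \<in> En n"
    using assms by (auto simp: cp_def)
  have Q0: "(Q@[v0])!0 = v0" using hQ by (cases Q) auto
  show ?thesis unfolding cp_def
  proof (intro conjI allI impI)
    fix j assume j: "j < length (P @ Q)"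
    show "((P @ Q) ! j, ((P @ Q) @ [v0]) ! Suc j) \<in> En n"
    proof (cases "j < length P")
      case True
      then show ?thesis
      proof (cases "Suc j < length P")
        case True
        then show ?thesis using eP[of j] by (simp add: nth_append)
      next
        case False
        then have "Suc j = length P" using \<open>j < length P\<close> by simp
        then show ?thesis using eP[of j] \<open>j < length P\<close> Q0 by (simp add: nth_append)
      qed
    next
      case False
      then obtain d where d: "j = length P + d" by (metis add_diff_inverse)
      then have "d < length Q" using j by simp
      then show ?thesis using eQ[of d] d by (simp add: nth_append)
    qed
  next
    assume "P @ Q \<noteq> []" then show "hd (P @ Q) = v0" using hP hQ by (cases P) auto
  qed
qed

lemma cp_concat: "(\<And>P. P \<in> set Ps \<Longrightarrow> cp n P) \<Longrightarrow> cp n (concat Ps)"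
  by (induction Ps) (auto intro: cp_append cp_Nil)

lemma cp_loopP: "cp n (loopP a)"
proof -
  have "loopP a @ [v0] = replicate (Suc a) v0" by (simp add: loopP_def replicate_append_same)
  then show ?thesis unfolding cp_def loopP_def using v0_En
    by (auto simp: nth_replicate hd_replicate)
qed

lemma cp_timesP: "cp n c \<Longrightarrow> cp n (timesP a c)"
  unfolding timesP_def by (rule cp_concat) auto

lemma cycv_0: "cycv n i 0 = v0" by (simp add: cycv_def)

lemma cp_cycP:
  assumes "1 \<le> k" "k \<le> n" shows "cp n (cycP (clen n) k)"
proof (cases "clen n k = 0")
  case True
  then show ?thesis by (simp add: cp_def cycP_def v0_En)
next
  case False
  let ?P = "cycP (clen n) k"
  have len: "length ?P = clen n k" using False by (simp add: cycP_def)
  have nth: "(?P @ [v0]) ! j = cycv n k j" if "j \<le> clen n k" for j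
  proof (cases "j = clen n k")
    case True then show ?thesis using len by (simp add: nth_append cycv_def)
  next
    case False
    then have "j < clen n k" using that by simp
    then show ?thesis by (cases j) (auto simp: cycP_def nth_append cycv_def v0_def)
  qed
  show ?thesis unfolding cp_def
  proof (intro conjI allI impI)
    fix j assume "j < length ?P"
    then have j: "j < clen n k" using len by simp
    have "?P ! j = (?P @ [v0]) ! j" using j len by (simp add: nth_append)
    then show "(?P ! j, (?P @ [v0]) ! Suc j) \<in> En n"
      using nth[of j] nth[of "Suc j"] j assms by (auto simp: En_def)
  qed (simp add: cycP_def)
qed

lemma set_cycP: "1 \<le> k \<Longrightarrow> k \<le> n \<Longrightarrow> set (cycP (clen n) k) \<subseteq> Vn n"
  by (auto simp: cycP_def Vn_def)

lemma set_loopP: "set (loopP a) \<subseteq> Vn n"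
  by (auto simp: loopP_def v0_Vn)

lemma set_timesP: "set c \<subseteq> Vn n \<Longrightarrow> set (timesP a c) \<subseteq> Vn n"
  by (auto simp: timesP_def)

lemma Pth_Suc: "Pth (Suc m) = Pdef (Suc m) (clen (Suc m))"
proof -
  have "(\<lambda>k. length (Pth m k)) = clen (Suc m)" by (rule ext) (simp add: clen_def)
  then show ?thesis by simp
qed

lemma Pdef_1: "Pdef n L 1 = concat (map (\<lambda>a. loopP a @ timesP 2 (cycP L 1)) [1..<2 * (1 + (\<Sum>k = 1..n. L k)) + 1])
        @ loopP 1 @ concat (map (\<lambda>k. timesP 2 (cycP L k)) [2..<n + 1]) @ loopP 1"
  unfolding Pdef_def Let_def by (simp only: if_True refl)
lemma Pdef_mid: "2 \<le> i \<Longrightarrow> i \<le> n \<Longrightarrow> Pdef n L i = loopP 1 @ concat (map (\<lambda>k. timesP 2 (cycP L k)) [i..<n + 1]) @ loopP 1"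
  unfolding Pdef_def Let_def by (simp only: if_True if_False refl) simp
lemma Pdef_last: "1 \<le> n \<Longrightarrow> Pdef n L (n+1) = loopP ((n + 2)^2 * (\<Sum>k = 1..n. L k))"
  unfolding Pdef_def Let_def by simp
lemma set_concat_sub: "(\<And>P. P \<in> set Ps \<Longrightarrow> set P \<subseteq> V) \<Longrightarrow> set (concat Ps) \<subseteq> V"
  by auto

lemma Pth_good:
  assumes "1 \<le> i" "i \<le> Suc n"
  shows "cp n (Pth n i) \<and> set (Pth n i) \<subseteq> Vn n \<and> (1 < length (Pth n i) \<longrightarrow> Pth n i ! 1 = v0)"
proof (cases n)
  case 0
  then have "i = 1" using assms by simp
  then show ?thesis using 0 cp_loopP set_loopP v0_Vn by (simp add: loopP_def)
next
  case (Suc m)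
  let ?L = "clen n"
  have cyc: "cp n (timesP 2 (cycP ?L k)) \<and> set (timesP 2 (cycP ?L k)) \<subseteq> Vn n" if "1 \<le> k" "k \<le> n" for k
    using cp_timesP[OF cp_cycP[OF that]] set_timesP[OF set_cycP[OF that]] by blast
  have tail: "cp n (concat (map (\<lambda>k. timesP 2 (cycP ?L k)) [a..<n + 1]))
     \<and> set (concat (map (\<lambda>k. timesP 2 (cycP ?L k)) [a..<n + 1])) \<subseteq> Vn n" if "1 \<le> a" for a
  proof
    show "cp n (concat (map (\<lambda>k. timesP 2 (cycP ?L k)) [a..<n + 1]))"
      by (rule cp_concat) (use cyc that in \<open>auto simp del: upt_Suc\<close>)
    show "set (concat (map (\<lambda>k. timesP 2 (cycP ?L k)) [a..<n + 1])) \<subseteq> Vn n"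
    proof (rule set_concat_sub)
      fix P assume "P \<in> set (map (\<lambda>k. timesP 2 (cycP ?L k)) [a..<n + 1])"
      then obtain k where k: "a \<le> k" "k \<le> n" "P = timesP 2 (cycP ?L k)" by (auto simp del: upt_Suc)
      then show "set P \<subseteq> Vn n" using cyc[of k] that by simp
    qed
  qed
  have head: "cp n (concat (map (\<lambda>a. loopP a @ timesP 2 (cycP ?L 1)) [1..<b]))
     \<and> set (concat (map (\<lambda>a. loopP a @ timesP 2 (cycP ?L 1)) [1..<b])) \<subseteq> Vn n" for b
  proof
    have c1: "cp n (timesP 2 (cycP ?L 1))" "set (timesP 2 (cycP ?L 1)) \<subseteq> Vn n"
      using cyc[of 1] Suc by auto
    show "cp n (concat (map (\<lambda>a. loopP a @ timesP 2 (cycP ?L 1)) [1..<b]))"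
      by (rule cp_concat) (use c1 in \<open>auto simp del: upt_Suc intro!: cp_append cp_loopP\<close>)
    show "set (concat (map (\<lambda>a. loopP a @ timesP 2 (cycP ?L 1)) [1..<b])) \<subseteq> Vn n"
      by (rule set_concat_sub) (use c1 set_loopP in \<open>(auto simp del: upt_Suc); blast\<close>)
  qed
  have c2: "timesP 2 c = c @ c" for c :: "vtx list"
    by (simp add: timesP_def numeral_2_eq_2)
  have cyc0: "cycP L k = v0 # tl (cycP L k)" for L k by (simp add: cycP_def)
  have PS: "Pth n = Pdef n ?L" unfolding Suc by (rule Pth_Suc)
  show ?thesis
  proof (cases "i = 1")
    case True
    define S where "S = (\<Sum>k = 1..n. ?L k)"
    have up: "[1..<2 * (1 + S) + 1] = 1 # [2..<2 * (1 + S) + 1]" using upt_conv_Cons[of 1 "2*(1+S)+1"] by (simp add: numeral_2_eq_2 del: upt_Suc)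
    have P: "Pth n i = concat (map (\<lambda>a. loopP a @ timesP 2 (cycP ?L 1)) [1..<2 * (1 + S) + 1])
        @ loopP 1 @ concat (map (\<lambda>k. timesP 2 (cycP ?L k)) [2..<n + 1]) @ loopP 1"
      unfolding True PS S_def by (rule Pdef_1)
    have "Pth n i ! 1 = v0"
      unfolding P up by (subst cyc0) (simp add: loopP_def c2 del: upt_Suc)
    moreover have "cp n (Pth n i)" unfolding P
      by (intro cp_append conjunct1[OF head] conjunct1[OF tail] cp_loopP) simp
    moreover have "set (Pth n i) \<subseteq> Vn n" unfolding P set_append
      by (intro Un_least conjunct2[OF head] conjunct2[OF tail] set_loopP) simp
    ultimately show ?thesis by blast
  next
    case False
    show ?thesis
    proof (cases "i \<le> n")
      case True
      have P: "Pth n i = loopP 1 @ concat (map (\<lambda>k. timesP 2 (cycP ?L k)) [i..<n + 1]) @ loopP 1"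
        unfolding PS using True False assms by (intro Pdef_mid) auto
      have up: "[i..<n + 1] = i # [Suc i..<n + 1]" using True by (simp add: upt_rec)
      have "Pth n i ! 1 = v0"
        unfolding P up by (subst cyc0) (simp add: loopP_def c2 del: upt_Suc)
      moreover have "cp n (Pth n i)" unfolding P
        by (intro cp_append conjunct1[OF tail] cp_loopP) (use assms in simp)
      moreover have "set (Pth n i) \<subseteq> Vn n" unfolding P set_append
        by (intro Un_least conjunct2[OF tail] set_loopP) (use assms in simp)
      ultimately show ?thesis by blast
    next
      case False2: False
      then have "i = n + 1" using assms by simp
      have P: "Pth n i = loopP ((n + 2)^2 * (\<Sum>k = 1..n. ?L k))"
        unfolding PS \<open>i = n + 1\<close> by (rule Pdef_last) (use Suc in simp)
      show ?thesis unfolding P using cp_loopP set_loopP by (simp add: loopP_def)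
    qed
  qed
qed
lemma cycv_eq_v0: "1 \<le> i \<Longrightarrow> cycv n i j = v0 \<longleftrightarrow> j = 0 \<or> j = clen n i"
  by (auto simp: cycv_def v0_def)

lemma cycv_V: "1 \<le> i \<Longrightarrow> i \<le> n \<Longrightarrow> j \<le> clen n i \<Longrightarrow> cycv n i j \<in> Vn n"
  by (auto simp: cycv_def Vn_def)

lemma En_V: assumes "(u, w) \<in> En n" shows "u \<in> Vn n \<and> w \<in> Vn n"
proof -
  from assms have "(u, w) = (v0, v0) \<or> (\<exists>i j. u = cycv n i j \<and> w = cycv n i (Suc j) \<and> 1 \<le> i \<and> i \<le> n \<and> j < clen n i)"
    unfolding En_def by blast
  then show ?thesis using v0_Vn cycv_V by fastforce
qed

lemma Vn_cases: "u \<in> Vn n \<Longrightarrow> u = v0 \<or> (\<exists>i j. u = (i, j) \<and> 1 \<le> i \<and> i \<le> n \<and> 1 \<le> j \<and> j < clen n i)"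
  by (auto simp: Vn_def)

lemma succ_exists: assumes "u \<in> Vn n" shows "\<exists>w. (u, w) \<in> En n"
proof -
  from Vn_cases[OF assms] show ?thesis
  proof
    assume "u = v0" then show ?thesis using v0_En by blast
  next
    assume "\<exists>i j. u = (i, j) \<and> 1 \<le> i \<and> i \<le> n \<and> 1 \<le> j \<and> j < clen n i"
    then obtain i j where ij: "u = (i, j)" "1 \<le> i" "i \<le> n" "1 \<le> j" "j < clen n i" by blast
    then have "u = cycv n i j" by (simp add: cycv_def)
    then have "(u, cycv n i (Suc j)) \<in> En n" unfolding En_def using ij by blast
    then show ?thesis by blast
  qed
qed

lemma succ_nonv0:
  assumes "(u, w) \<in> En n" "u \<noteq> v0"
  shows "w = cycv n (fst u) (Suc (snd u))"
proof -
  from assms obtain i j where ij: "u = cycv n i j" "w = cycv n i (Suc j)" "1 \<le> i" "i \<le> n" "j < clen n i"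
    unfolding En_def by blast
  then have "u = (i, j)" using assms(2) by (auto simp: cycv_def split: if_splits)
  then show ?thesis using ij by simp
qed

lemma succ_v0:
  assumes "(v0, w) \<in> En n"
  shows "w = v0 \<or> (\<exists>i. 1 \<le> i \<and> i \<le> n \<and> w = cycv n i 1 \<and> 0 < clen n i)"
proof -
  from assms have "w = v0 \<or> (\<exists>i j. v0 = cycv n i j \<and> w = cycv n i (Suc j) \<and> 1 \<le> i \<and> i \<le> n \<and> j < clen n i)"
    unfolding En_def by blast
  then show ?thesis
  proof
    assume "\<exists>i j. v0 = cycv n i j \<and> w = cycv n i (Suc j) \<and> 1 \<le> i \<and> i \<le> n \<and> j < clen n i"
    then obtain i j where ij: "v0 = cycv n i j" "w = cycv n i (Suc j)" "1 \<le> i" "i \<le> n" "j < clen n i" by blast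
    then have "j = 0" using cycv_eq_v0[of i n j] by auto
    then show ?thesis using ij by auto
  qed simp
qed

lemma phi_v0[simp]: "phi n v0 = v0" by (simp add: phi_def)

lemma phi_V: assumes "v \<in> Vn (Suc n)" shows "phi n v \<in> Vn n"
proof -
  from Vn_cases[OF assms] show ?thesis
  proof
    assume "v = v0" then show ?thesis by (simp add: v0_Vn)
  next
    assume "\<exists>i j. v = (i, j) \<and> 1 \<le> i \<and> i \<le> Suc n \<and> 1 \<le> j \<and> j < clen (Suc n) i"
    then obtain i j where ij: "v = (i, j)" "1 \<le> i" "i \<le> Suc n" "1 \<le> j" "j < clen (Suc n) i" by blast
    then have "v \<noteq> v0" by (simp add: v0_def)
    then have "phi n v = Pth n i ! j" using ij by (simp add: phi_def)
    moreover have "j < length (Pth n i)" using ij by (simp add: clen_def)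
    ultimately show ?thesis using Pth_good[OF ij(2,3)] by (metis nth_mem subsetD)
  qed
qed

lemma phi_cycv:
  assumes "1 \<le> i" "i \<le> Suc n" "j \<le> clen (Suc n) i" "0 < clen (Suc n) i"
  shows "phi n (cycv (Suc n) i j) = (Pth n i @ [v0]) ! j"
proof -
  have len: "length (Pth n i) = clen (Suc n) i" by (simp add: clen_def)
  have hd: "Pth n i \<noteq> [] \<Longrightarrow> hd (Pth n i) = v0" using Pth_good[OF assms(1,2)] by (simp add: cp_def)
  show ?thesis
  proof (cases "j = 0")
    case True
    then show ?thesis using hd assms(4) len by (cases "Pth n i") (auto simp: cycv_def)
  next
    case False
    show ?thesis
    proof (cases "j = clen (Suc n) i")
      case True then show ?thesis using len by (simp add: cycv_def nth_append)
    next
      case F2: False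
      then have "cycv (Suc n) i j = (i, j)" "(i, j) \<noteq> v0" using False assms(1) by (auto simp: cycv_def v0_def)
      then show ?thesis using F2 assms(3) len by (simp add: phi_def nth_append)
    qed
  qed
qed

lemma phi_E: assumes "(u, w) \<in> En (Suc n)" shows "(phi n u, phi n w) \<in> En n"
proof -
  from assms have "(u, w) = (v0, v0) \<or> (\<exists>i j. u = cycv (Suc n) i j \<and> w = cycv (Suc n) i (Suc j) \<and> 1 \<le> i \<and> i \<le> Suc n \<and> j < clen (Suc n) i)"
    unfolding En_def by blast
  then show ?thesis
  proof
    assume "(u, w) = (v0, v0)" then show ?thesis using v0_En by simp
  next
    assume "\<exists>i j. u = cycv (Suc n) i j \<and> w = cycv (Suc n) i (Suc j) \<and> 1 \<le> i \<and> i \<le> Suc n \<and> j < clen (Suc n) i"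
    then obtain i j where ij: "u = cycv (Suc n) i j" "w = cycv (Suc n) i (Suc j)" "1 \<le> i" "i \<le> Suc n" "j < clen (Suc n) i" by blast
    have len: "length (Pth n i) = clen (Suc n) i" by (simp add: clen_def)
    have "phi n u = (Pth n i @ [v0]) ! j" "phi n w = (Pth n i @ [v0]) ! Suc j"
      using phi_cycv[of i n j] phi_cycv[of i n "Suc j"] ij by auto
    moreover have "(Pth n i @ [v0]) ! j = Pth n i ! j" using ij len by (simp add: nth_append)
    moreover have "(Pth n i ! j, (Pth n i @ [v0]) ! Suc j) \<in> En n"
      using Pth_good[OF ij(3,4)] ij(5) len by (simp add: cp_def)
    ultimately show ?thesis by simp
  qed
qed

lemma phi_succ_det:
  assumes "(u, w1) \<in> En (Suc n)" "(u, w2) \<in> En (Suc n)"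
  shows "phi n w1 = phi n w2"
proof (cases "u = v0")
  case False
  then show ?thesis using succ_nonv0[OF assms(1)] succ_nonv0[OF assms(2)] by simp
next
  case True
  have "phi n w = v0" if "(v0, w) \<in> En (Suc n)" for w
  proof -
    from succ_v0[OF that] show ?thesis
    proof
      assume "\<exists>i. 1 \<le> i \<and> i \<le> Suc n \<and> w = cycv (Suc n) i 1 \<and> 0 < clen (Suc n) i"
      then obtain i where i: "1 \<le> i" "i \<le> Suc n" "w = cycv (Suc n) i 1" "0 < clen (Suc n) i" by blast
      show ?thesis
      proof (cases "clen (Suc n) i = 1")
        case True then show ?thesis using i by (simp add: cycv_def)
      next
        case False
        have "clen (Suc n) i = length (Pth n i)" by (simp add: clen_def)
        then have "1 < length (Pth n i)" using i(4) False by linarith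
        then show ?thesis using phi_cycv[of i n 1] i Pth_good[OF i(1,2)] False
          by (simp add: nth_append)
      qed
    qed simp
  qed
  then show ?thesis using assms True by simp
qed

lemma Xsp_phi: "x \<in> Xsp \<Longrightarrow> phi n (x (Suc n)) = x n" by (simp add: Xsp_def)
lemma Xsp_V: "x \<in> Xsp \<Longrightarrow> x n \<in> Vn n" by (simp add: Xsp_def)

lemma T_props:
  assumes x: "x \<in> Xsp"
  shows "Tmap x \<in> Xsp \<and> (\<forall>n. (x n, Tmap x n) \<in> En n)"
proof -
  define w where "w n = (SOME w. (x (Suc n), w) \<in> En (Suc n))" for n
  have wE: "(x (Suc n), w n) \<in> En (Suc n)" for n
    unfolding w_def by (rule someI_ex) (rule succ_exists[OF Xsp_V[OF x]])
  define y where "y n = phi n (w n)" for n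
  have yV: "y n \<in> Vn n" for n
    unfolding y_def using phi_V En_V[OF wE] by blast
  have yE: "(x n, y n) \<in> En n" for n
    unfolding y_def using phi_E[OF wE[of n]] Xsp_phi[OF x, of n] by simp
  have yphi: "phi n (y (Suc n)) = y n" for n
  proof -
    have "(x (Suc n), y (Suc n)) \<in> En (Suc n)" using yE .
    then show ?thesis unfolding y_def[of n] by (rule phi_succ_det[OF _ wE])
  qed
  have yX: "y \<in> Xsp" using yV yphi by (simp add: Xsp_def)
  have uniq: "z = y" if "z \<in> Xsp \<and> (\<forall>n. (x n, z n) \<in> En n)" for z
  proof
    fix n
    have "z n = phi n (z (Suc n))" using Xsp_phi that by simp
    also have "\<dots> = phi n (w n)" using phi_succ_det that wE by blast
    finally show "z n = y n" by (simp add: y_def)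
  qed
  have "Tmap x = y" unfolding Tmap_def
    by (rule the_equality) (use yX yE uniq in auto)
  then show ?thesis using yX yE by simp
qed

lemma Tpow_X: "x \<in> Xsp \<Longrightarrow> (Tmap ^^ k) x \<in> Xsp"
  by (induction k) (auto dest: T_props)

lemma T_step:
  assumes "z \<in> Xsp" "z m \<noteq> v0"
  shows "Tmap z m = cycv m (fst (z m)) (Suc (snd (z m)))"
  using succ_nonv0[OF _ assms(2)] T_props[OF assms(1)] by blast

lemma reach_aux:
  "z \<in> Xsp \<Longrightarrow> clen m (fst (z m)) - snd (z m) = d \<Longrightarrow> \<exists>k. (Tmap ^^ k) z m = v0"
proof (induction d arbitrary: z rule: less_induct)
  case (less d)
  show ?case
  proof (cases "z m = v0")
    case True then show ?thesis by (rule_tac x=0 in exI) simp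
  next
    case False
    then obtain i j where ij: "z m = (i, j)" "1 \<le> i" "i \<le> m" "1 \<le> j" "j < clen m i"
      using Vn_cases[OF Xsp_V[OF less.prems(1)]] by blast
    have T: "Tmap z m = cycv m i (Suc j)" using T_step[OF less.prems(1) False] ij by simp
    have Tz: "Tmap z \<in> Xsp" using T_props[OF less.prems(1)] by blast
    show ?thesis
    proof (cases "Suc j = clen m i")
      case True
      then have "(Tmap ^^ 1) z m = v0" using T by (simp add: cycv_def)
      then show ?thesis by blast
    next
      case F2: False
      then have "Tmap z m = (i, Suc j)" using T by (simp add: cycv_def)
      then have "clen m (fst (Tmap z m)) - snd (Tmap z m) < d" using less.prems(2) ij F2 by simp
      from less.IH[OF this Tz refl] obtain k where "(Tmap ^^ k) (Tmap z) m = v0" by blast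
      then have "(Tmap ^^ Suc k) z m = v0" by (simp add: funpow_Suc_right del: funpow.simps)
      then show ?thesis by blast
    qed
  qed
qed

lemma reach: "z \<in> Xsp \<Longrightarrow> \<exists>k. (Tmap ^^ k) z m = v0"
  using reach_aux by blast

lemma down: "x \<in> Xsp \<Longrightarrow> x (l + d) = v0 \<Longrightarrow> x l = v0"
proof (induction d)
  case (Suc d)
  have "x (l + d) = phi (l + d) (x (Suc (l + d)))" using Xsp_phi[OF Suc.prems(1)] by simp
  also have "\<dots> = v0" using Suc.prems(2) by simp
  finally show ?case using Suc.IH Suc.prems(1) by simp
qed simp

lemma dist_bound:
  assumes "z \<in> Xsp" "z m = v0"
  shows "dX z pnt \<le> (1/2) ^ Suc m"
proof (cases "z = pnt")
  case True then show ?thesis by (simp add: dX_def)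
next
  case False
  define L where "L = (LEAST i. z i \<noteq> pnt i)"
  have ex: "\<exists>i. z i \<noteq> pnt i" using False by auto
  have "z L \<noteq> pnt L" unfolding L_def by (rule LeastI_ex[OF ex])
  moreover have "z i = pnt i" if "i \<le> m" for i
    using down[OF assms(1), of i "m - i"] assms(2) that by (simp add: pnt_def)
  ultimately have "Suc m \<le> L" by (metis not_less_eq_eq)
  then have "((1::real)/2) ^ L \<le> (1/2) ^ Suc m" by (intro power_decreasing) auto
  then show ?thesis using False by (simp add: dX_def L_def)
qed

theorem lemma3p3:
  assumes "x \<in> Xsp"
  shows "pnt \<in> omegaT x"
  unfolding omegaT_def
proof (rule InterI)
  fix A assume "A \<in> range (\<lambda>n. Xclosure {(Tmap ^^ k) x |k. k \<ge> n})"
  then obtain n where A: "A = Xclosure {(Tmap ^^ k) x |k. k \<ge> n}" by blast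
  have pX: "pnt \<in> Xsp" by (simp add: Xsp_def pnt_def v0_Vn)
  have "\<exists>a\<in>{(Tmap ^^ k) x |k. k \<ge> n}. dX a pnt < e" if e: "e > 0" for e :: real
  proof -
    obtain m where m: "((1::real)/2) ^ m < e" using real_arch_pow_inv[OF e, of "1/2"] by auto
    obtain k where k: "(Tmap ^^ k) ((Tmap ^^ n) x) m = v0" using reach[OF Tpow_X[OF assms]] by blast
    have eq: "(Tmap ^^ (k + n)) x = (Tmap ^^ k) ((Tmap ^^ n) x)" by (simp add: funpow_add)
    have "dX ((Tmap ^^ (k + n)) x) pnt \<le> (1/2) ^ Suc m"
      unfolding eq by (rule dist_bound[OF Tpow_X[OF Tpow_X[OF assms]] k])
    also have "\<dots> \<le> (1/2) ^ m" by (intro power_decreasing) auto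
    finally have "dX ((Tmap ^^ (k + n)) x) pnt < e" using m by linarith
    moreover have "(Tmap ^^ (k + n)) x \<in> {(Tmap ^^ k) x |k. k \<ge> n}" by auto
    ultimately show ?thesis by blast
  qed
  then show "pnt \<in> A" unfolding A Xclosure_def using pX by blast
qed

end
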